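(* Let $n,k,s$ be positive integers with $2\le s\le\lfloor n/k\rfloor$, write $n=ds+s_0$ with $d=\lfloor n/s\rfloor$, and assume $s_0<\min\{d,s\}$. The Cubic Code is a valid exact-repair (indeed repair-by-transfer) scheme for the Fixed Cluster Repair System with parameters $(n,k,s)$ storing a file of size $M$, with storage $\alpha$ equal to its repair bandwidth $\gamma$, where $$\gamma_{cc}(n,k,s)=\begin{cases}\dfrac{Md^{s}}{d^{s+1}-(d-\lceil\frac{k}{s+1}\rceil)^{s_1}(d-\lfloor\frac{k}{s+1}\rfloor)^{s+1-s_1}} & \text{if } s_0\ge\lfloor\frac{k}{s+1}\rfloor,\\[3mm] \dfrac{Md^{s}}{d^{s+1}-(d-s_0)(d-\lceil\frac{k-s_0}{s}\rceil)^{s_2}(d-\lfloor\frac{k-s_0}{s}\rfloor)^{s-s_2}} & \text{if } s_0<\lfloor\frac{k}{s+1}\rfloor,\end{cases}$$ with $s_1=k\bmod(s+1)$ and $s_2=(k-s_0)\bmod s$.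
   Context: FCRS: $n=ds+s_0$ servers in clusters $1,\dots,s$ of size $d$ and cluster $s+1$ of size $s_0$; server $(i,j)$ stores at most $\alpha$ units; any $k$ servers (from any clusters) must recover the file; a failed server $(r,\ell)$ is repaired (exactly) by downloading $\beta$ units from each of the $d$ servers of any cluster $i\in[s]$, $i\ne r$; repair bandwidth $\gamma=d\beta$. Cubic Code: split the file into $m$ independent chunks of size $M/m$ and encode them with a $(d^{s+1},m)$ MDS code whose codeword symbols $C_b$ are indexed by strings $b=b_{s+1}\cdots b_1$ with $b_i\in[d]$. Server $(i,j)$, $(i,j)\in([s]\times[d])\cup(\{s+1\}\times[s_0])$, stores $\{C_b: b_i=j\}$. To repair $(r,\ell)$ from cluster $i$, server $(i,j)$ sends $\{C_b:b_i=j,\ b_r=\ell\}$. The number of chunks is $m=\min\{d^{s+1}-\prod_{i=1}^{s+1}(d-k_i):k_i\in\mathbb Z_{\ge0},\ \sum_{i}k_i=k,\ k_{s+1}\le s_0\}$, the number of distinct codeword symbols held by the worst-case set of $k$ servers. *)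

theory Defs
  imports Complex_Main
begin

text \<open>Conventions: cluster indices are 1..s+1, positions inside a cluster and the
  letters of the alphabet [d] are 0-based (0..<d).  A codeword index
  b = b_{s+1}...b_1 is a function nat => nat which is < d on 1..s+1 and 0 elsewhere.\<close>

definition cc_words :: "nat \<Rightarrow> nat \<Rightarrow> (nat \<Rightarrow> nat) set" where
  "cc_words d s = {b. (\<forall>i\<in>{1..s+1}. b i < d) \<and> (\<forall>i. i \<notin> {1..s+1} \<longrightarrow> b i = 0)}"

definition fcrs_servers :: "nat \<Rightarrow> nat \<Rightarrow> nat \<Rightarrow> (nat \<times> nat) set" where
  "fcrs_servers d s s0 = {(i,j). 1 \<le> i \<and> i \<le> s \<and> j < d} \<union> {(i,j). i = s+1 \<and> j < s0}"

definition cc_stored :: "nat \<Rightarrow> nat \<Rightarrow> nat \<Rightarrow> nat \<Rightarrow> (nat \<Rightarrow> nat) set" where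
  "cc_stored d s i j = {b \<in> cc_words d s. b i = j}"

text \<open>Symbols sent by helper (i,j) to repair failed server (r,l).\<close>
definition cc_sent :: "nat \<Rightarrow> nat \<Rightarrow> nat \<Rightarrow> nat \<Rightarrow> nat \<Rightarrow> nat \<Rightarrow> (nat \<Rightarrow> nat) set" where
  "cc_sent d s i j r l = {b \<in> cc_words d s. b i = j \<and> b r = l}"

definition cc_m :: "nat \<Rightarrow> nat \<Rightarrow> nat \<Rightarrow> int" where
  "cc_m n k s = (let d = n div s; s0 = n mod s in
     Min {int d ^ (s+1) - (\<Prod>i=1..s+1. (int d - int (kv i))) | kv :: nat \<Rightarrow> nat.
            (\<Sum>i=1..s+1. kv i) = k \<and> kv (s+1) \<le> s0})"

definition mds_code :: "((nat \<Rightarrow> 'a) \<Rightarrow> 'b \<Rightarrow> 'a) \<Rightarrow> nat \<Rightarrow> 'b set \<Rightarrow> bool" where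
  "mds_code enc m W \<longleftrightarrow>
     (\<forall>x y. (\<forall>c<m. x c = y c) \<longrightarrow> (\<forall>b\<in>W. enc x b = enc y b)) \<and>
     (\<forall>T. T \<subseteq> W \<and> card T = m \<longrightarrow>
        (\<forall>x y. (\<forall>b\<in>T. enc x b = enc y b) \<longrightarrow> (\<forall>c<m. x c = y c)))"

definition gamma_cc :: "nat \<Rightarrow> nat \<Rightarrow> nat \<Rightarrow> real \<Rightarrow> real" where
  "gamma_cc n k s M = (let d = n div s; s0 = n mod s;
       s1 = k mod (s+1); s2 = (k - s0) mod s in
     if s0 \<ge> k div (s+1) then
       M * real d ^ s /
         (real d ^ (s+1)
          - (real d - of_int \<lceil>real k / real (s+1)\<rceil>) ^ s1
            * (real d - of_int \<lfloor>real k / real (s+1)\<rfloor>) ^ (s+1-s1))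
     else
       M * real d ^ s /
         (real d ^ (s+1)
          - (real d - real s0)
            * (real d - of_int \<lceil>real (k - s0) / real s\<rceil>) ^ s2
            * (real d - of_int \<lfloor>real (k - s0) / real s\<rfloor>) ^ (s-s2)))"

end

theory Submission
  imports Defs "HOL-Library.FuncSet"
begin


lemma card_fun_set:
  assumes "finite A"
  shows "card {b. (\<forall>t\<in>A. b t \<in> F t) \<and> (\<forall>t. t \<notin> A \<longrightarrow> b t = (0::nat))} = (\<Prod>t\<in>A. card (F t))"
proof -
  let ?g = "\<lambda>f t. if t \<in> A then f t else (0::nat)"
  have eq: "{b. (\<forall>t\<in>A. b t \<in> F t) \<and> (\<forall>t. t \<notin> A \<longrightarrow> b t = (0::nat))} = ?g ` (PiE A F)"
  proof (rule set_eqI, rule iffI)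
    fix b assume b: "b \<in> {b. (\<forall>t\<in>A. b t \<in> F t) \<and> (\<forall>t. t \<notin> A \<longrightarrow> b t = (0::nat))}"
    have "restrict b A \<in> PiE A F" using b by auto
    moreover have "b = ?g (restrict b A)" using b by (auto simp: fun_eq_iff)
    ultimately show "b \<in> ?g ` (PiE A F)" by blast
  next
    fix b assume "b \<in> ?g ` (PiE A F)"
    then show "b \<in> {b. (\<forall>t\<in>A. b t \<in> F t) \<and> (\<forall>t. t \<notin> A \<longrightarrow> b t = (0::nat))}"
      by (auto simp: PiE_def Pi_def)
  qed
  have inj: "inj_on ?g (PiE A F)"
  proof (rule inj_onI)
    fix f h assume f: "f \<in> PiE A F" and h: "h \<in> PiE A F" and e: "?g f = ?g h"
    show "f = h"
    proof (rule PiE_ext[OF f h])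
      fix x assume "x \<in> A" then show "f x = h x" using fun_cong[OF e, of x] by simp
    qed
  qed
  show ?thesis unfolding eq using card_image[OF inj] card_PiE[OF assms] by simp
qed

lemma prod_if_one:
  assumes "finite A" "i \<in> A"
  shows "(\<Prod>t\<in>A. (if t = i then 1 else (d::nat))) = d ^ (card A - 1)"
proof -
  have "(\<Prod>t\<in>A. (if t = i then 1 else (d::nat))) = (if i = i then 1 else d) * (\<Prod>t\<in>A-{i}. (if t = i then 1 else d))"
    by (rule prod.remove[OF assms])
  also have "\<dots> = (\<Prod>t\<in>A-{i}. d)" by (auto intro: prod.cong)
  also have "\<dots> = d ^ (card A - 1)" using assms by simp
  finally show ?thesis .
qed

lemma card_words: "card (cc_words d s) = d ^ (s+1)"
proof -
  have "cc_words d s = {b. (\<forall>t\<in>{1..s+1}. b t \<in> {..<d}) \<and> (\<forall>t. t \<notin> {1..s+1} \<longrightarrow> b t = (0::nat))}"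
    unfolding cc_words_def by auto
  then show ?thesis using card_fun_set[of "{1..s+1}" "\<lambda>_. {..<d}"] by simp
qed

lemma card_stored:
  assumes "i \<in> {1..s+1}" "j < d"
  shows "card (cc_stored d s i j) = d ^ s"
proof -
  have "cc_stored d s i j = {b. (\<forall>t\<in>{1..s+1}. b t \<in> (if t = i then {j} else {..<d})) \<and> (\<forall>t. t \<notin> {1..s+1} \<longrightarrow> b t = (0::nat))}"
    unfolding cc_stored_def cc_words_def using assms by auto
  then have "card (cc_stored d s i j) = (\<Prod>t\<in>{1..s+1}. card (if t = i then {j} else {..<d}))"
    using card_fun_set[of "{1..s+1}"] by simp
  also have "\<dots> = (\<Prod>t\<in>{1..s+1}. (if t = i then 1 else d))" by (intro prod.cong) auto
  also have "\<dots> = d ^ s" using prod_if_one[of "{1..s+1}" i d] assms by simp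
  finally show ?thesis .
qed

lemma card_sent:
  assumes "i \<in> {1..s+1}" "r \<in> {1..s+1}" "i \<noteq> r" "j < d" "l < d"
  shows "card (cc_sent d s i j r l) = d ^ (s - 1)"
proof -
  let ?F = "\<lambda>t. if t = i then {j} else if t = r then {l} else {..<d}"
  have "cc_sent d s i j r l = {b. (\<forall>t\<in>{1..s+1}. b t \<in> ?F t) \<and> (\<forall>t. t \<notin> {1..s+1} \<longrightarrow> b t = (0::nat))}"
    unfolding cc_sent_def cc_words_def using assms by auto
  then have "card (cc_sent d s i j r l) = (\<Prod>t\<in>{1..s+1}. card (?F t))"
    using card_fun_set[of "{1..s+1}"] by simp
  also have "\<dots> = (\<Prod>t\<in>{1..s+1}. (if t = i then 1 else if t = r then 1 else d))" by (intro prod.cong) auto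
  also have "\<dots> = (if i = i then 1 else if i = r then 1 else d) * (\<Prod>t\<in>{1..s+1}-{i}. (if t = i then 1 else if t = r then 1 else d))"
    by (rule prod.remove) (use assms in auto)
  also have "\<dots> = (\<Prod>t\<in>{1..s+1}-{i}. (if t = r then 1 else d))" by (auto intro: prod.cong)
  also have "\<dots> = d ^ (card ({1..s+1}-{i}) - 1)" using assms by (intro prod_if_one) auto
  also have "\<dots> = d ^ (s - 1)" using assms by simp
  finally show ?thesis .
qed



lemma prod_two:
  assumes "finite I" "i \<in> I" "j \<in> I" "i \<noteq> j"
  shows "prod f I = f i * f j * prod f (I - {i,j})"
proof -
  have "prod f I = f i * prod f (I - {i})" using prod.remove[OF assms(1,2)] .
  also have "prod f (I - {i}) = f j * prod f (I - {i} - {j})"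
    using prod.remove[of "I - {i}" j f] assms by simp
  also have "I - {i} - {j} = I - {i,j}" by auto
  finally show ?thesis by (simp add: mult.assoc)
qed

lemma sum_two:
  assumes "finite I" "i \<in> I" "j \<in> I" "i \<noteq> j"
  shows "sum f I = f i + f j + sum f (I - {i,j})"
proof -
  have "sum f I = f i + sum f (I - {i})" using sum.remove[OF assms(1,2)] .
  also have "sum f (I - {i}) = f j + sum f (I - {i} - {j})"
    using sum.remove[of "I - {i}" j f] assms by simp
  also have "I - {i} - {j} = I - {i,j}" by auto
  finally show ?thesis by (simp add: add.assoc)
qed

lemma key_ineq:
  fixes a b d :: nat
  assumes "b + 2 \<le> a" "a \<le> d"
  shows "(d - a) * (d - b) \<le> (d - (a - 1)) * (d - (b + 1))"
proof -
  obtain u where u: "d = a + u" using assms le_iff_add by blast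
  obtain w where w: "a = b + 2 + w" using assms le_iff_add by blast
  have "(d - a) * (d - b) = u * (u + 2 + w)" using u w by simp
  moreover have "(d - (a - 1)) * (d - (b + 1)) = (u + 1) * (u + 1 + w)" using u w by simp
  ultimately show ?thesis by (simp add: algebra_simps)
qed

lemma move_props:
  fixes x :: "nat \<Rightarrow> nat"
  assumes "finite I" "i \<in> I" "j \<in> I" "i \<noteq> j" "x j + 2 \<le> x i" "\<forall>t\<in>I. x t \<le> d"
  defines "x' \<equiv> x(i := x i - 1, j := x j + 1)"
  shows "(\<Prod>t\<in>I. d - x t) \<le> (\<Prod>t\<in>I. d - x' t)"
    and "sum x' I = sum x I"
    and "(\<Sum>t\<in>I. x' t ^ 2) < (\<Sum>t\<in>I. x t ^ 2)"
    and "\<forall>t\<in>I. x' t \<le> d"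
proof -
  have xi: "x' i = x i - 1" and xj: "x' j = x j + 1" using assms(4) unfolding x'_def by auto
  have rest: "\<And>t. t \<in> I - {i,j} \<Longrightarrow> x' t = x t" unfolding x'_def by auto
  have pr: "(\<Prod>t\<in>I - {i,j}. d - x' t) = (\<Prod>t\<in>I - {i,j}. d - x t)"
    using rest by (intro prod.cong) auto
  have sr: "(\<Sum>t\<in>I - {i,j}. x' t) = (\<Sum>t\<in>I - {i,j}. x t)"
    using rest by (intro sum.cong) auto
  have sqr: "(\<Sum>t\<in>I - {i,j}. x' t ^ 2) = (\<Sum>t\<in>I - {i,j}. x t ^ 2)"
    using rest by (intro sum.cong) auto
  have dx: "x i \<le> d" using assms by auto
  show "(\<Prod>t\<in>I. d - x t) \<le> (\<Prod>t\<in>I. d - x' t)"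
    unfolding prod_two[OF assms(1-4), of "\<lambda>t. d - x t"] prod_two[OF assms(1-4), of "\<lambda>t. d - x' t"] pr xi xj
    using key_ineq[OF assms(5) dx] by (intro mult_right_mono) auto
  show "sum x' I = sum x I"
    unfolding sum_two[OF assms(1-4), of x] sum_two[OF assms(1-4), of x'] sr xi xj using assms(5) by simp
  have "(x i - 1)^2 + (x j + 1)^2 < x i ^ 2 + x j ^ 2"
  proof -
    obtain w where w: "x i = x j + 2 + w" using assms(5) le_iff_add by blast
    show ?thesis unfolding w by (simp add: power2_eq_square algebra_simps)
  qed
  then show "(\<Sum>t\<in>I. x' t ^ 2) < (\<Sum>t\<in>I. x t ^ 2)"
    unfolding sum_two[OF assms(1-4), of "\<lambda>t. x t ^ 2"] sum_two[OF assms(1-4), of "\<lambda>t. x' t ^ 2"] sqr xi xj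
    by simp
  show "\<forall>t\<in>I. x' t \<le> d" using assms(2,5,6) unfolding x'_def by auto
qed

lemma terminal:
  fixes x :: "nat \<Rightarrow> nat"
  assumes "finite I" "c \<in> I" "\<forall>t\<in>I. x t \<le> d" "x c \<le> u"
  shows "\<exists>z. (\<forall>t\<in>I. z t \<le> d) \<and> z c \<le> u \<and> sum z I = sum x I
     \<and> (\<Prod>t\<in>I. d - x t) \<le> (\<Prod>t\<in>I. d - z t)
     \<and> (\<forall>i\<in>I-{c}. \<forall>j\<in>I-{c}. z i \<le> z j + 1)
     \<and> (\<forall>j\<in>I. z c \<le> z j + 1)
     \<and> (z c = u \<or> (\<forall>j\<in>I. z j \<le> z c + 1))"
  using assms(3,4)
proof (induction "\<Sum>t\<in>I. x t ^ 2" arbitrary: x rule: less_induct)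
  case less
  note bd = less.prems(1) and cu = less.prems(2)
  show ?case
  proof (cases "\<exists>i\<in>I-{c}. \<exists>j\<in>I-{c}. x j + 2 \<le> x i")
    case True
    then obtain i j where ij: "i \<in> I-{c}" "j \<in> I-{c}" "x j + 2 \<le> x i" by blast
    then have ne: "i \<noteq> j" by auto
    let ?x' = "x(i := x i - 1, j := x j + 1)"
    note mp = move_props[OF assms(1) _ _ ne ij(3) bd]
    have "?x' c = x c" using ij by auto
    then obtain z where z: "(\<forall>t\<in>I. z t \<le> d) \<and> z c \<le> u \<and> sum z I = sum ?x' I
     \<and> (\<Prod>t\<in>I. d - ?x' t) \<le> (\<Prod>t\<in>I. d - z t)
     \<and> (\<forall>i\<in>I-{c}. \<forall>j\<in>I-{c}. z i \<le> z j + 1)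
     \<and> (\<forall>j\<in>I. z c \<le> z j + 1)
     \<and> (z c = u \<or> (\<forall>j\<in>I. z j \<le> z c + 1))"
      using less.hyps[of ?x'] mp ij cu by auto
    then show ?thesis using mp ij by (intro exI[of _ z]) (auto intro: order.trans)
  next
    case F1: False
    show ?thesis
    proof (cases "\<exists>j\<in>I. x j + 2 \<le> x c")
      case True
      then obtain j where j: "j \<in> I" "x j + 2 \<le> x c" by blast
      then have ne: "c \<noteq> j" by auto
      let ?x' = "x(c := x c - 1, j := x j + 1)"
      note mp = move_props[OF assms(1) assms(2) j(1) ne j(2) bd]
      have "?x' c \<le> u" using ne cu by auto
      then obtain z where z: "(\<forall>t\<in>I. z t \<le> d) \<and> z c \<le> u \<and> sum z I = sum ?x' I
       \<and> (\<Prod>t\<in>I. d - ?x' t) \<le> (\<Prod>t\<in>I. d - z t)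
       \<and> (\<forall>i\<in>I-{c}. \<forall>j\<in>I-{c}. z i \<le> z j + 1)
       \<and> (\<forall>j\<in>I. z c \<le> z j + 1)
       \<and> (z c = u \<or> (\<forall>j\<in>I. z j \<le> z c + 1))"
        using less.hyps[of ?x'] mp by auto
      then show ?thesis using mp by (intro exI[of _ z]) (auto intro: order.trans)
    next
      case F2: False
      show ?thesis
      proof (cases "x c \<noteq> u \<and> (\<exists>j\<in>I. x c + 2 \<le> x j)")
        case True
        then obtain j where j: "j \<in> I" "x c + 2 \<le> x j" and cu': "x c < u" using cu by auto
        then have ne: "j \<noteq> c" by auto
        let ?x' = "x(j := x j - 1, c := x c + 1)"
        note mp = move_props[OF assms(1) j(1) assms(2) ne j(2) bd]
        have "?x' c \<le> u" using ne cu' by auto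
        then obtain z where z: "(\<forall>t\<in>I. z t \<le> d) \<and> z c \<le> u \<and> sum z I = sum ?x' I
         \<and> (\<Prod>t\<in>I. d - ?x' t) \<le> (\<Prod>t\<in>I. d - z t)
         \<and> (\<forall>i\<in>I-{c}. \<forall>j\<in>I-{c}. z i \<le> z j + 1)
         \<and> (\<forall>j\<in>I. z c \<le> z j + 1)
         \<and> (z c = u \<or> (\<forall>j\<in>I. z j \<le> z c + 1))"
          using less.hyps[of ?x'] mp by auto
        then show ?thesis using mp by (intro exI[of _ z]) (auto intro: order.trans)
      next
        case False
        have T1: "\<forall>i\<in>I-{c}. \<forall>j\<in>I-{c}. x i \<le> x j + 1"
        proof (intro ballI)
          fix i j assume ij: "i \<in> I-{c}" "j \<in> I-{c}"
          show "x i \<le> x j + 1"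
          proof (rule ccontr)
            assume "\<not> x i \<le> x j + 1"
            then have "x j + 2 \<le> x i" by simp
            then show False using F1 ij by blast
          qed
        qed
        have T2: "\<forall>j\<in>I. x c \<le> x j + 1" using F2 by fastforce
        have T3: "x c = u \<or> (\<forall>j\<in>I. x j \<le> x c + 1)"
        proof (cases "x c = u")
          case False2: False
          then have "\<forall>j\<in>I. \<not> x c + 2 \<le> x j" using False by blast
          then show ?thesis by auto
        qed simp
        show ?thesis using T1 T2 T3 bd cu by (intro exI[of _ x]) auto
      qed
    qed
  qed
qed



lemma divmod_unique_nat:
  fixes K a R m :: nat
  assumes "K = a * m + R" "R < m"
  shows "K div m = a" "K mod m = R"
  using assms by auto

lemma balanced_prod:
  fixes z :: "nat \<Rightarrow> nat"
  assumes "finite J" "J \<noteq> {}" "\<forall>i\<in>J. \<forall>j\<in>J. z i \<le> z j + 1" "sum z J = K"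
  shows "(\<Prod>i\<in>J. d - z i) = (d - (K div card J + 1)) ^ (K mod card J) * (d - K div card J) ^ (card J - K mod card J)"
proof -
  define a where "a = Min (z ` J)"
  have "a \<in> z ` J" unfolding a_def using assms(1,2) by (intro Min_in) auto
  then obtain i0 where i0: "i0 \<in> J" "z i0 = a" by auto
  have ge: "\<forall>i\<in>J. a \<le> z i" unfolding a_def using assms(1) by auto
  have vals: "\<forall>i\<in>J. z i = a \<or> z i = a + 1" using ge assms(3) i0 by force
  define H where "H = {i\<in>J. z i = a + 1}"
  define L where "L = {i\<in>J. z i = a}"
  have HL: "H \<inter> L = {}" "H \<union> L = J" using vals unfolding H_def L_def by auto
  have fin: "finite H" "finite L" using assms(1) unfolding H_def L_def by auto
  have cardJ: "card J = card H + card L" using card_Un_disjoint[OF fin HL(1)] HL(2) by simp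
  have i0L: "i0 \<in> L" using i0 unfolding L_def by auto
  then have "card L > 0" using fin card_gt_0_iff by blast
  then have Hlt: "card H < card J" using cardJ by simp
  have "sum z J = sum z H + sum z L" using sum.union_disjoint[OF fin HL(1)] HL(2) by simp
  also have "sum z H = card H * (a + 1)" unfolding H_def by simp
  also have "sum z L = card L * a" unfolding L_def by simp
  finally have "K = a * card J + card H" using assms(4) cardJ by (simp add: algebra_simps)
  note dm = divmod_unique_nat[OF this Hlt]
  have "(\<Prod>i\<in>J. d - z i) = (\<Prod>i\<in>H. d - z i) * (\<Prod>i\<in>L. d - z i)"
    using prod.union_disjoint[OF fin HL(1)] HL(2) by simp
  also have "(\<Prod>i\<in>H. d - z i) = (d - (a + 1)) ^ card H" unfolding H_def by simp
  also have "(\<Prod>i\<in>L. d - z i) = (d - a) ^ card L" unfolding L_def by simp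
  finally show ?thesis unfolding dm using cardJ by simp
qed

lemma terminal_value:
  fixes z :: "nat \<Rightarrow> nat"
  assumes s1: "1 \<le> s"
    and zc: "z (s+1) \<le> s0"
    and sumz: "sum z {1..s+1} = k"
    and T1: "\<forall>i\<in>{1..s+1}-{s+1}. \<forall>j\<in>{1..s+1}-{s+1}. z i \<le> z j + 1"
    and T2: "\<forall>j\<in>{1..s+1}. z (s+1) \<le> z j + 1"
    and T3: "z (s+1) = s0 \<or> (\<forall>j\<in>{1..s+1}. z j \<le> z (s+1) + 1)"
  shows "(\<Prod>i\<in>{1..s+1}. d - z i) = (if k div (s+1) \<le> s0
     then (d - (k div (s+1) + 1))^(k mod (s+1)) * (d - k div (s+1))^(s+1 - k mod (s+1))
     else (d - s0) * (d - ((k-s0) div s + 1))^((k-s0) mod s) * (d - (k-s0) div s)^(s - (k-s0) mod s))"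
proof -
  let ?I = "{1..s+1::nat}"
  let ?c = "s+1"
  have cI: "?c \<in> ?I" by simp
  have Ic: "?I - {?c} = {1..s}" by auto
  have sumsplit: "sum z ?I = z ?c + sum z {1..s}" by simp
  show ?thesis
  proof (cases "k div (s+1) \<le> s0")
    case True
    have bal: "\<forall>i\<in>?I. \<forall>j\<in>?I. z i \<le> z j + 1"
    proof (intro ballI)
      fix i j assume i: "i \<in> ?I" and j: "j \<in> ?I"
      show "z i \<le> z j + 1"
      proof (cases "i = ?c")
        case True then show ?thesis using T2 j by auto
      next
        case inc: False
        show ?thesis
        proof (cases "j = ?c")
          case False then show ?thesis using T1 i j inc by auto
        next
          case jc: True
          show ?thesis
          proof (rule ccontr)
            assume "\<not> z i \<le> z j + 1"
            then have zi: "z i \<ge> z ?c + 2" using jc by simp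
            then have c0: "z ?c = s0" using T3 i by force
            have lb: "\<forall>t\<in>?I - {?c, i}. s0 + 1 \<le> z t"
            proof
              fix t assume "t \<in> ?I - {?c, i}"
              then have "z i \<le> z t + 1" using T1 i inc by auto
              then show "s0 + 1 \<le> z t" using zi c0 by simp
            qed
            have "sum z ?I = z ?c + z i + sum z (?I - {?c, i})"
              by (rule sum_two) (use i inc in auto)
            moreover have "sum z (?I - {?c, i}) \<ge> (\<Sum>t\<in>?I - {?c, i}. s0 + 1)"
              using lb by (intro sum_mono) auto
            moreover have "card (?I - {?c, i}) = s - 1" using i inc by (simp add: card_Diff_subset)
            ultimately have "k \<ge> s0 + (s0 + 2) + (s - 1) * (s0 + 1)"
              using sumz zi c0 by simp
            moreover have "s0 + (s0 + 2) + (s - 1) * (s0 + 1) = (s+1) * s0 + s + 1"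
              using s1 by (cases s) (auto simp: algebra_simps)
            moreover have "k = (s+1) * (k div (s+1)) + k mod (s+1)" by (metis mult_div_mod_eq)
            moreover have "(s+1) * (k div (s+1)) \<le> (s+1) * s0" using True by (rule mult_le_mono2)
            moreover have "k mod (s+1) \<le> s" using mod_less_divisor[of "s+1" k] by simp
            ultimately show False by linarith
          qed
        qed
      qed
    qed
    show ?thesis using balanced_prod[OF _ _ bal sumz, of d] True by simp
  next
    case False
    have c0: "z ?c = s0"
    proof (rule ccontr)
      assume ne: "z ?c \<noteq> s0"
      then have lt: "z ?c < s0" using zc by simp
      have all: "\<forall>j\<in>?I. z j \<le> z ?c + 1" using T3 ne by auto
      have "sum z {1..s} \<le> (\<Sum>t\<in>{1..s}. z ?c + 1)" using all by (intro sum_mono) auto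
      then have "k \<le> z ?c + s * (z ?c + 1)" using sumz sumsplit by simp
      moreover have "(s+1) * (z ?c + 1) \<le> (s+1) * s0" using lt by (intro mult_le_mono2) simp
      moreover have "(s+1) * s0 \<le> (s+1) * (k div (s+1))" using False by (intro mult_le_mono2) simp
      moreover have "(s+1) * (k div (s+1)) \<le> k" by (metis mult_div_mod_eq le_add1)
      ultimately show False by (simp add: algebra_simps)
    qed
    have bal: "\<forall>i\<in>{1..s}. \<forall>j\<in>{1..s}. z i \<le> z j + 1" using T1 Ic by simp
    have sum2: "sum z {1..s} = k - s0" using sumz sumsplit c0 by simp
    have "(\<Prod>i\<in>?I. d - z i) = (d - s0) * (\<Prod>i\<in>{1..s}. d - z i)" using c0 by simp
    also have "(\<Prod>i\<in>{1..s}. d - z i) = (d - ((k-s0) div s + 1))^((k-s0) mod s) * (d - (k-s0) div s)^(s - (k-s0) mod s)"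
      using balanced_prod[OF _ _ bal sum2, of d] s1 by simp
    finally show ?thesis using False by (simp add: mult.assoc)
  qed
qed



definition pmax :: "nat \<Rightarrow> nat \<Rightarrow> nat \<Rightarrow> nat \<Rightarrow> nat" where
  "pmax d s0 k s = (if k div (s+1) \<le> s0
     then (d - (k div (s+1) + 1))^(k mod (s+1)) * (d - k div (s+1))^(s+1 - k mod (s+1))
     else (d - s0) * (d - ((k-s0) div s + 1))^((k-s0) mod s) * (d - (k-s0) div s)^(s - (k-s0) mod s))"

lemma opt_bound:
  fixes kv :: "nat \<Rightarrow> nat"
  assumes "k \<le> d" "1 \<le> s" "sum kv {1..s+1} = k" "kv (s+1) \<le> s0"
  shows "(\<Prod>i\<in>{1..s+1}. d - kv i) \<le> pmax d s0 k s"
proof -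
  have bd: "\<forall>t\<in>{1..s+1}. kv t \<le> d"
  proof
    fix t assume "t \<in> {1..s+1}"
    then have "kv t \<le> sum kv {1..s+1}" by (intro member_le_sum) auto
    then show "kv t \<le> d" using assms by simp
  qed
  obtain z where z: "(\<forall>t\<in>{1..s+1}. z t \<le> d) \<and> z (s+1) \<le> s0 \<and> sum z {1..s+1} = sum kv {1..s+1}
     \<and> (\<Prod>t\<in>{1..s+1}. d - kv t) \<le> (\<Prod>t\<in>{1..s+1}. d - z t)
     \<and> (\<forall>i\<in>{1..s+1}-{s+1}. \<forall>j\<in>{1..s+1}-{s+1}. z i \<le> z j + 1)
     \<and> (\<forall>j\<in>{1..s+1}. z (s+1) \<le> z j + 1)
     \<and> (z (s+1) = s0 \<or> (\<forall>j\<in>{1..s+1}. z j \<le> z (s+1) + 1))"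
    using terminal[of "{1..s+1}" "s+1" kv d s0] bd assms(4) by auto
  have "(\<Prod>i\<in>{1..s+1}. d - z i) = pmax d s0 k s"
    unfolding pmax_def using z assms by (intro terminal_value) auto
  then show ?thesis using z by simp
qed

lemma opt_attain:
  assumes "k \<le> d" "1 \<le> s"
  shows "\<exists>z::nat\<Rightarrow>nat. sum z {1..s+1} = k \<and> z (s+1) \<le> s0 \<and> (\<forall>t\<in>{1..s+1}. z t \<le> d)
           \<and> (\<Prod>i\<in>{1..s+1}. d - z i) = pmax d s0 k s"
proof -
  define x0 :: "nat \<Rightarrow> nat" where "x0 = (\<lambda>t. if t = 1 then k else 0)"
  have s0: "sum x0 {1..s+1} = k" unfolding x0_def by simp
  have bd: "\<forall>t\<in>{1..s+1}. x0 t \<le> d" unfolding x0_def using assms by auto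
  have c0: "x0 (s+1) \<le> s0" unfolding x0_def using assms by auto
  obtain z where z: "(\<forall>t\<in>{1..s+1}. z t \<le> d) \<and> z (s+1) \<le> s0 \<and> sum z {1..s+1} = sum x0 {1..s+1}
     \<and> (\<Prod>t\<in>{1..s+1}. d - x0 t) \<le> (\<Prod>t\<in>{1..s+1}. d - z t)
     \<and> (\<forall>i\<in>{1..s+1}-{s+1}. \<forall>j\<in>{1..s+1}-{s+1}. z i \<le> z j + 1)
     \<and> (\<forall>j\<in>{1..s+1}. z (s+1) \<le> z j + 1)
     \<and> (z (s+1) = s0 \<or> (\<forall>j\<in>{1..s+1}. z j \<le> z (s+1) + 1))"
    using terminal[of "{1..s+1}" "s+1" x0 d s0] bd c0 by auto
  have "(\<Prod>i\<in>{1..s+1}. d - z i) = pmax d s0 k s"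
    unfolding pmax_def using z assms s0 by (intro terminal_value) auto
  then show ?thesis using z s0 by (intro exI[of _ z]) auto
qed

lemma prod_int_eq:
  assumes "\<forall>t\<in>I. (kv t::nat) \<le> d"
  shows "(\<Prod>i\<in>I. (int d - int (kv i))) = int (\<Prod>i\<in>I. d - kv i)"
  using assms by (simp add: of_nat_prod of_nat_diff)

lemma prod_lt_pow:
  fixes z :: "nat \<Rightarrow> nat"
  assumes "finite I" "i \<in> I" "1 \<le> z i" "\<forall>t\<in>I. z t \<le> d"
  shows "(\<Prod>t\<in>I. d - z t) < d ^ card I"
proof -
  have "(\<Prod>t\<in>I. d - z t) = (d - z i) * (\<Prod>t\<in>I-{i}. d - z t)" by (rule prod.remove[OF assms(1,2)])
  also have "\<dots> \<le> (d - z i) * d ^ card (I - {i})"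
  proof (intro mult_left_mono)
    have "(\<Prod>t\<in>I-{i}. d - z t) \<le> (\<Prod>t\<in>I-{i}. d)" by (intro prod_mono) auto
    then show "(\<Prod>t\<in>I-{i}. d - z t) \<le> d ^ card (I - {i})" by simp
  qed simp
  also have "\<dots> < d * d ^ card (I - {i})"
    using assms by (intro mult_strict_right_mono) auto
  also have "d * d ^ card (I - {i}) = d ^ card I"
    using assms by (metis card_Diff1_less card_gt_0_iff card_Suc_Diff1 empty_iff power_Suc)
  finally show ?thesis .
qed

lemma cc_m_value:
  assumes "k \<le> n div s" "1 \<le> k" "1 \<le> s"
  shows "cc_m n k s = int (n div s) ^ (s+1) - int (pmax (n div s) (n mod s) k s)"
    and "pmax (n div s) (n mod s) k s < (n div s) ^ (s+1)"
proof -
  let ?d = "n div s" and ?s0 = "n mod s"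
  let ?S = "{int ?d ^ (s+1) - (\<Prod>i=1..s+1. (int ?d - int (kv i))) | kv :: nat \<Rightarrow> nat.
            (\<Sum>i=1..s+1. kv i) = k \<and> kv (s+1) \<le> ?s0}"
  have feas: "\<forall>t\<in>{1..s+1}. kv t \<le> ?d" if "(\<Sum>i=1..s+1. kv i) = k" for kv :: "nat \<Rightarrow> nat"
  proof
    fix t assume "t \<in> {1..s+1}"
    then have "kv t \<le> sum kv {1..s+1}" by (intro member_le_sum) auto
    then show "kv t \<le> ?d" using that assms by simp
  qed
  have elem: "\<And>v. v \<in> ?S \<Longrightarrow> \<exists>kv::nat\<Rightarrow>nat. v = int ?d ^ (s+1) - int (\<Prod>i=1..s+1. ?d - kv i)
      \<and> (\<Sum>i=1..s+1. kv i) = k \<and> kv (s+1) \<le> ?s0"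
  proof -
    fix v assume "v \<in> ?S"
    then obtain kv :: "nat \<Rightarrow> nat" where kv: "v = int ?d ^ (s+1) - (\<Prod>i=1..s+1. (int ?d - int (kv i)))"
      "(\<Sum>i=1..s+1. kv i) = k" "kv (s+1) \<le> ?s0" by blast
    show "\<exists>kv::nat\<Rightarrow>nat. v = int ?d ^ (s+1) - int (\<Prod>i=1..s+1. ?d - kv i)
      \<and> (\<Sum>i=1..s+1. kv i) = k \<and> kv (s+1) \<le> ?s0"
      using kv prod_int_eq[OF feas[OF kv(2)]] by (intro exI[of _ kv]) simp
  qed
  have fin: "finite ?S"
  proof (rule finite_subset[of _ "{int ?d ^ (s+1) - int (?d ^ (s+1)) .. int ?d ^ (s+1)}"])
    show "?S \<subseteq> {int ?d ^ (s+1) - int (?d ^ (s+1)) .. int ?d ^ (s+1)}"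
    proof
      fix v assume "v \<in> ?S"
      then obtain kv :: "nat\<Rightarrow>nat" where kv: "v = int ?d ^ (s+1) - int (\<Prod>i=1..s+1. ?d - kv i)"
        "(\<Sum>i=1..s+1. kv i) = k" using elem by blast
      have "(\<Prod>i=1..s+1. ?d - kv i) \<le> (\<Prod>i=1..s+1. ?d)" by (intro prod_mono) auto
      then have "(\<Prod>i=1..s+1. ?d - kv i) \<le> ?d ^ (s+1)" by simp
      then have "int (\<Prod>i=1..s+1. ?d - kv i) \<le> int (?d ^ (s+1))" by linarith
      moreover have "0 \<le> int (\<Prod>i=1..s+1. ?d - kv i)" by (rule of_nat_0_le_iff)
      ultimately show "v \<in> {int ?d ^ (s+1) - int (?d ^ (s+1)) .. int ?d ^ (s+1)}" unfolding atLeastAtMost_iff using kv(1) by linarith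
    qed
  qed simp
  obtain z :: "nat \<Rightarrow> nat" where z: "sum z {1..s+1} = k" "z (s+1) \<le> ?s0" "\<forall>t\<in>{1..s+1}. z t \<le> ?d"
     "(\<Prod>i\<in>{1..s+1}. ?d - z i) = pmax ?d ?s0 k s"
    using opt_attain[OF assms(1,3)] by blast
  have zin: "int ?d ^ (s+1) - int (pmax ?d ?s0 k s) \<in> ?S"
  proof -
    have "int ?d ^ (s+1) - int (pmax ?d ?s0 k s) = int ?d ^ (s+1) - (\<Prod>i=1..s+1. (int ?d - int (z i)))"
      by (simp only: prod_int_eq[OF z(3)] z(4))
    then show ?thesis using z(1,2) by blast
  qed
  show "cc_m n k s = int ?d ^ (s+1) - int (pmax ?d ?s0 k s)"
    unfolding cc_m_def Let_def
  proof (rule Min_eqI[OF fin _ zin])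
    fix v assume "v \<in> ?S"
    then obtain kv :: "nat\<Rightarrow>nat" where kv: "v = int ?d ^ (s+1) - int (\<Prod>i=1..s+1. ?d - kv i)"
        "(\<Sum>i=1..s+1. kv i) = k" "kv (s+1) \<le> ?s0" using elem by blast
    have "(\<Prod>i=1..s+1. ?d - kv i) \<le> pmax ?d ?s0 k s" using opt_bound[OF assms(1,3) kv(2,3)] .
    then show "int ?d ^ (s+1) - int (pmax ?d ?s0 k s) \<le> v" using kv(1) by linarith
  qed
  obtain i where i: "i \<in> {1..s+1}" "1 \<le> z i"
  proof (rule ccontr)
    assume "\<not> thesis"
    then have "\<forall>i\<in>{1..s+1}. z i = 0" using that by force
    then have "sum z {1..s+1} = 0" by simp
    then show False using z(1) assms by simp
  qed
  show "pmax ?d ?s0 k s < ?d ^ (s+1)"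
    using prod_lt_pow[of "{1..s+1}" i z ?d] i z by simp
qed



lemma ceil_div_nat:
  assumes "0 < m" "K mod m \<noteq> 0"
  shows "\<lceil>real K / real m\<rceil> = int (K div m) + 1"
proof (rule ceiling_unique)
  have K: "real K = real m * real (K div m) + real (K mod m)"
    by (metis of_nat_add of_nat_mult mult_div_mod_eq)
  have r1: "0 < real (K mod m)" using assms by simp
  have r2: "real (K mod m) < real m" using assms by simp
  have mpos: "0 < real m" using assms by simp
  show "real_of_int (int (K div m) + 1) - 1 < real K / real m"
    using K r1 mpos by (simp add: field_simps)
  show "real K / real m \<le> real_of_int (int (K div m) + 1)"
    using K r2 mpos by (simp add: field_simps)
qed

lemma floor_div_nat: "\<lfloor>real K / real m\<rfloor> = int (K div m)"
  using floor_divide_of_nat_eq[of K m] by simp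

lemma pow_ceil_term:
  assumes "0 < m" "K div m + 1 \<le> d \<or> K mod m = 0"
  shows "real ((d - (K div m + 1)) ^ (K mod m)) = (real d - of_int \<lceil>real K / real m\<rceil>) ^ (K mod m)"
proof (cases "K mod m = 0")
  case True then show ?thesis by simp
next
  case False
  then have "K div m + 1 \<le> d" using assms by simp
  then show ?thesis using ceil_div_nat[OF assms(1) False] by (simp add: of_nat_diff add.commute)
qed

lemma pow_floor_term:
  assumes "K div m \<le> d"
  shows "real ((d - K div m) ^ e) = (real d - of_int \<lfloor>real K / real m\<rfloor>) ^ e"
  using assms floor_div_nat[of K m] by (simp add: of_nat_diff)

lemma divp1_le:
  fixes K m :: nat
  assumes "0 < m" "K mod m \<noteq> 0"
  shows "K div m + 1 \<le> K"
proof -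
  have "K = m * (K div m) + K mod m" by (metis mult_div_mod_eq)
  moreover have "K div m \<le> m * (K div m)" using assms by simp
  moreover have "1 \<le> K mod m" using assms by simp
  ultimately show ?thesis by linarith
qed

lemma real_pmax:
  assumes "k \<le> d" "1 \<le> k" "1 \<le> s" "s0 < d"
  shows "real (pmax d s0 k s) = (if s0 \<ge> k div (s+1) then
         (real d - of_int \<lceil>real k / real (s+1)\<rceil>) ^ (k mod (s+1))
            * (real d - of_int \<lfloor>real k / real (s+1)\<rfloor>) ^ (s+1-k mod (s+1))
     else
         (real d - real s0)
            * (real d - of_int \<lceil>real (k - s0) / real s\<rceil>) ^ ((k - s0) mod s)
            * (real d - of_int \<lfloor>real (k - s0) / real s\<rfloor>) ^ (s-(k - s0) mod s))"
proof (cases "k div (s+1) \<le> s0")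
  case True
  have a: "k div (s+1) + 1 \<le> d \<or> k mod (s+1) = 0"
    using divp1_le[of "s+1" k] assms by auto
  have b: "k div (s+1) \<le> d" using assms div_le_dividend[of k "s+1"] by linarith
  show ?thesis using True pow_ceil_term[OF _ a] pow_floor_term[OF b, of "s+1-k mod (s+1)"]
    unfolding pmax_def by (simp only: if_True of_nat_mult)
next
  case False
  have a: "(k-s0) div s + 1 \<le> d \<or> (k-s0) mod s = 0"
    using divp1_le[of s "k-s0"] assms by auto
  have b: "(k-s0) div s \<le> d" using assms div_le_dividend[of "k-s0" s] by linarith
  have c: "real (d - s0) = real d - real s0" using assms by (simp add: of_nat_diff)
  show ?thesis using False pow_ceil_term[OF _ a] pow_floor_term[OF b, of "s-(k-s0) mod s"] c assms
    unfolding pmax_def by (simp only: if_False of_nat_mult)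
qed



lemma set_main:
  fixes n k s :: nat and M :: real
    and enc :: "(nat \<Rightarrow> 'a) \<Rightarrow> (nat \<Rightarrow> nat) \<Rightarrow> 'a"
  assumes "0 < n" "0 < k" "2 \<le> s" "s \<le> n div k"
    and "n mod s < min (n div s) s"
    and "0 < M"
    and "mds_code enc (nat (cc_m n k s)) (cc_words (n div s) s)"
  shows "0 < cc_m n k s
    \<and> 
      (\<forall>K. K \<subseteq> fcrs_servers (n div s) s (n mod s) \<and> card K = k \<longrightarrow>
         (\<forall>x y. (\<forall>(i,j)\<in>K. \<forall>b\<in>cc_stored (n div s) s i j. enc x b = enc y b)
                \<longrightarrow> (\<forall>c<nat (cc_m n k s). x c = y c)))
    \<and> 
      (\<forall>(r,l)\<in>fcrs_servers (n div s) s (n mod s). \<forall>i\<in>{1..s}. i \<noteq> r \<longrightarrow>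
         (\<forall>j<n div s. cc_sent (n div s) s i j r l \<subseteq> cc_stored (n div s) s i j) \<and>
         (\<Union>j<n div s. cc_sent (n div s) s i j r l) = cc_stored (n div s) s r l)
    \<and> 
      (\<forall>(i,j)\<in>fcrs_servers (n div s) s (n mod s).
         real (card (cc_stored (n div s) s i j)) * (M / real_of_int (cc_m n k s))
           = gamma_cc n k s M)
    \<and> 
      (\<forall>(r,l)\<in>fcrs_servers (n div s) s (n mod s). \<forall>i\<in>{1..s}. \<forall>j<n div s. i \<noteq> r \<longrightarrow>
         real (n div s) * (real (card (cc_sent (n div s) s i j r l)) * (M / real_of_int (cc_m n k s)))
           = gamma_cc n k s M)"
proof -
  define d where "d = n div s"
  define s0 where "s0 = n mod s"
  have spos: "0 < s" "1 \<le> s" using assms(3) by auto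
  have "s * k \<le> n" using assms(4) assms(2)
    by (metis div_mult_self_is_m dual_order.trans div_le_dividend mult.commute mult_le_mono1 less_eq_div_iff_mult_less_eq)
  then have kd: "k \<le> d" unfolding d_def using spos by (simp add: less_eq_div_iff_mult_less_eq mult.commute)
  have s0d: "s0 < d" using assms(5) unfolding d_def s0_def by simp
  have k1: "1 \<le> k" using assms(2) by simp
  note cm = cc_m_value[of k n s, folded d_def s0_def, OF kd k1 spos(2)]
  have cm1: "cc_m n k s = int (d^(s+1)) - int (pmax d s0 k s)" using cm(1) by simp
  have "int (pmax d s0 k s) < int (d^(s+1))" using cm(2) by (rule of_nat_less_iff[THEN iffD2])
  then have mpos: "0 < cc_m n k s" using cm1 by linarith
  have mnat: "nat (cc_m n k s) = d ^ (s+1) - pmax d s0 k s" unfolding cm1 by arith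
  have gam: "gamma_cc n k s M = M * real d ^ s / real_of_int (cc_m n k s)"
  proof -
    have "real_of_int (cc_m n k s) = real d ^ (s+1) - real (pmax d s0 k s)"
      using cm(1) by simp
    then show ?thesis unfolding gamma_cc_def Let_def d_def[symmetric] s0_def[symmetric]
      using real_pmax[OF kd k1 spos(2) s0d] by (simp split: if_split)
  qed
  have serv: "\<And>i j. (i,j) \<in> fcrs_servers d s s0 \<Longrightarrow> i \<in> {1..s+1} \<and> j < d"
    unfolding fcrs_servers_def using s0d by auto
  have P1: "\<forall>K. K \<subseteq> fcrs_servers d s s0 \<and> card K = k \<longrightarrow>
         (\<forall>x y. (\<forall>(i,j)\<in>K. \<forall>b\<in>cc_stored d s i j. enc x b = enc y b)
                \<longrightarrow> (\<forall>c<nat (cc_m n k s). x c = y c))"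
  proof (intro allI impI)
    fix K :: "(nat \<times> nat) set" and x y :: "nat \<Rightarrow> 'a"
    assume K: "K \<subseteq> fcrs_servers d s s0 \<and> card K = k"
      and xy: "\<forall>(i,j)\<in>K. \<forall>b\<in>cc_stored d s i j. enc x b = enc y b"
    fix c assume c: "c < nat (cc_m n k s)"
    define J where "J i = {j. (i,j) \<in> K}" for i
    define kv where "kv i = card (J i)" for i
    have KS: "K = Sigma {1..s+1} J" using K serv unfolding J_def by auto
    have Jsub: "J t \<subseteq> {..<d}" for t using K serv unfolding J_def by auto
    have Jfin: "finite (J t)" for t using Jsub finite_subset by blast
    have sumk: "sum kv {1..s+1} = k" using K KS card_SigmaI[of "{1..s+1}" J] Jfin unfolding kv_def by simp
    have Jc: "J (s+1) \<subseteq> {..<s0}" using K unfolding J_def fcrs_servers_def by auto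
    have kvc: "kv (s+1) \<le> s0" unfolding kv_def using card_mono[OF _ Jc] by simp
    define U where "U = (\<Union>(i,j)\<in>K. cc_stored d s i j)"
    have UW: "U \<subseteq> cc_words d s" unfolding U_def cc_stored_def by auto
    have WU: "cc_words d s - U = {b. (\<forall>t\<in>{1..s+1}. b t \<in> {..<d} - J t) \<and> (\<forall>t. t \<notin> {1..s+1} \<longrightarrow> b t = (0::nat))}"
    proof (rule set_eqI)
      fix b :: "nat \<Rightarrow> nat"
      have "b \<in> U \<longleftrightarrow> b \<in> cc_words d s \<and> (\<exists>t\<in>{1..s+1}. b t \<in> J t)"
        unfolding U_def cc_stored_def J_def using KS by blast
      then show "b \<in> cc_words d s - U \<longleftrightarrow> b \<in> {b. (\<forall>t\<in>{1..s+1}. b t \<in> {..<d} - J t) \<and> (\<forall>t. t \<notin> {1..s+1} \<longrightarrow> b t = (0::nat))}"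
        unfolding cc_words_def by auto
    qed
    have "card (cc_words d s - U) = (\<Prod>t\<in>{1..s+1}. card ({..<d} - J t))"
      unfolding WU by (rule card_fun_set) simp
    also have "\<dots> = (\<Prod>t\<in>{1..s+1}. d - kv t)"
      unfolding kv_def using Jsub Jfin by (intro prod.cong) (auto simp: card_Diff_subset)
    finally have cWU: "card (cc_words d s - U) = (\<Prod>t\<in>{1..s+1}. d - kv t)" .
    have "0 < d" using kd k1 by simp
    then have "0 < card (cc_words d s)" unfolding card_words by simp
    then have finW: "finite (cc_words d s)" using card_gt_0_iff by blast
    have "card (cc_words d s - U) = card (cc_words d s) - card U"
      by (rule card_Diff_subset[OF finite_subset[OF UW finW] UW])
    moreover have "card U \<le> card (cc_words d s)" by (rule card_mono[OF finW UW])
    ultimately have cU: "card U = d ^ (s+1) - (\<Prod>t\<in>{1..s+1}. d - kv t)"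
      using cWU card_words[of d s] by simp
    have "(\<Prod>t\<in>{1..s+1}. d - kv t) \<le> pmax d s0 k s" by (rule opt_bound[OF kd spos(2) sumk kvc])
    then have le: "nat (cc_m n k s) \<le> card U" using mnat cU by simp
    obtain T where T: "T \<subseteq> U" "card T = nat (cc_m n k s)" "finite T"
      using obtain_subset_with_card_n[OF le] by blast
    have eqT: "\<forall>b\<in>T. enc x b = enc y b" using T(1) xy unfolding U_def by blast
    have "\<forall>T. T \<subseteq> cc_words d s \<and> card T = nat (cc_m n k s) \<longrightarrow>
        (\<forall>x y. (\<forall>b\<in>T. enc x b = enc y b) \<longrightarrow> (\<forall>c<nat (cc_m n k s). x c = y c))"
      using assms(7) unfolding mds_code_def d_def by blast
    then show "x c = y c" using T UW eqT c by blast
  qed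
  have P2: "\<forall>(r,l)\<in>fcrs_servers d s s0. \<forall>i\<in>{1..s}. i \<noteq> r \<longrightarrow>
         (\<forall>j<d. cc_sent d s i j r l \<subseteq> cc_stored d s i j) \<and>
         (\<Union>j<d. cc_sent d s i j r l) = cc_stored d s r l"
  proof (clarify)
    fix r l i assume rl: "(r,l) \<in> fcrs_servers d s s0" and i: "i \<in> {1..s}" "i \<noteq> r"
    show "(\<forall>j<d. cc_sent d s i j r l \<subseteq> cc_stored d s i j) \<and>
         (\<Union>j<d. cc_sent d s i j r l) = cc_stored d s r l"
    proof (intro conjI allI impI subsetI equalityI)
      fix j b assume "b \<in> cc_sent d s i j r l" then show "b \<in> cc_stored d s i j"
        unfolding cc_sent_def cc_stored_def by auto
    next
      fix b assume "b \<in> (\<Union>j<d. cc_sent d s i j r l)" then show "b \<in> cc_stored d s r l"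
        unfolding cc_sent_def cc_stored_def by auto
    next
      fix b assume b: "b \<in> cc_stored d s r l"
      then have "b i < d" using i unfolding cc_stored_def cc_words_def by auto
      then show "b \<in> (\<Union>j<d. cc_sent d s i j r l)" using b unfolding cc_sent_def cc_stored_def by auto
    qed
  qed
  have P3: "\<forall>(i,j)\<in>fcrs_servers d s s0.
         real (card (cc_stored d s i j)) * (M / real_of_int (cc_m n k s)) = gamma_cc n k s M"
  proof (clarify)
    fix i j assume "(i,j) \<in> fcrs_servers d s s0"
    then have "card (cc_stored d s i j) = d ^ s" using serv card_stored by blast
    then show "real (card (cc_stored d s i j)) * (M / real_of_int (cc_m n k s)) = gamma_cc n k s M"
      unfolding gam by simp
  qed
  have P4: "\<forall>(r,l)\<in>fcrs_servers d s s0. \<forall>i\<in>{1..s}. \<forall>j<d. i \<noteq> r \<longrightarrow>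
         real d * (real (card (cc_sent d s i j r l)) * (M / real_of_int (cc_m n k s))) = gamma_cc n k s M"
  proof (clarify)
    fix r l i j assume rl: "(r,l) \<in> fcrs_servers d s s0" and i: "i \<in> {1..s}" and j: "j < d" and ir: "i \<noteq> r"
    have "card (cc_sent d s i j r l) = d ^ (s-1)" using serv[OF rl] i j ir by (intro card_sent) auto
    moreover have "real d * real d ^ (s-1) = real d ^ s" using spos
      by (metis Suc_diff_1 power_Suc of_nat_power)
    ultimately show "real d * (real (card (cc_sent d s i j r l)) * (M / real_of_int (cc_m n k s))) = gamma_cc n k s M"
      unfolding gam by (simp add: mult.assoc[symmetric])
  qed
  show ?thesis using mpos P1 P2 P3 P4 unfolding d_def s0_def by blast
qed


theorem theorem2:
  fixes n k s :: nat and M :: real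
    and enc :: "(nat \<Rightarrow> 'a) \<Rightarrow> (nat \<Rightarrow> nat) \<Rightarrow> 'a"
  assumes "0 < n" "0 < k" "2 \<le> s" "s \<le> n div k"
    and "n mod s < min (n div s) s"
    and "0 < M"
    and "mds_code enc (nat (cc_m n k s)) (cc_words (n div s) s)"
  shows "0 < cc_m n k s
    \<and> \<comment> \<open>any k servers recover the file\<close>
      (\<forall>K. K \<subseteq> fcrs_servers (n div s) s (n mod s) \<and> card K = k \<longrightarrow>
         (\<forall>x y. (\<forall>(i,j)\<in>K. \<forall>b\<in>cc_stored (n div s) s i j. enc x b = enc y b)
                \<longrightarrow> (\<forall>c<nat (cc_m n k s). x c = y c)))
    \<and> \<comment> \<open>exact repair by transfer from any other cluster i in [s]\<close>
      (\<forall>(r,l)\<in>fcrs_servers (n div s) s (n mod s). \<forall>i\<in>{1..s}. i \<noteq> r \<longrightarrow>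
         (\<forall>j<n div s. cc_sent (n div s) s i j r l \<subseteq> cc_stored (n div s) s i j) \<and>
         (\<Union>j<n div s. cc_sent (n div s) s i j r l) = cc_stored (n div s) s r l)
    \<and> \<comment> \<open>storage alpha per server equals gamma_cc\<close>
      (\<forall>(i,j)\<in>fcrs_servers (n div s) s (n mod s).
         real (card (cc_stored (n div s) s i j)) * (M / real_of_int (cc_m n k s))
           = gamma_cc n k s M)
    \<and> \<comment> \<open>repair bandwidth gamma = d * beta equals gamma_cc\<close>
      (\<forall>(r,l)\<in>fcrs_servers (n div s) s (n mod s). \<forall>i\<in>{1..s}. \<forall>j<n div s. i \<noteq> r \<longrightarrow>
         real (n div s) * (real (card (cc_sent (n div s) s i j r l)) * (M / real_of_int (cc_m n k s)))
           = gamma_cc n k s M)"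
    by (rule set_main[OF assms])

end
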